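(* In the lower-bound instance for CTS-G described in the context, for any round $t>T/2$ such that $K_{t-1}\le0.5\,m(t-H)$, we have $|\bar G_t|\ge\frac m2$, where $\bar G_t:=\{a\in G: n_{a,t}\ge H\}$.
   Context: Top-$m$ instance: $N$ base arms with $N\ge400m$, $m\ge1$; every round any $m$ of the $N$ arms may be played. A set $G\subset[N]$ with $|G|=m$ is fixed; rewards are deterministic: $r_a=\Delta$ for $a\in G$ and $r_a=0$ otherwise, with $\Delta:=\frac45\sqrt{\frac{N\ln T}{T}}$ and $T>\frac{16}{25}N\ln T$. The agent runs CTS-G with $\gamma=1$: in round $t$ draw independently $w_{a,t}\sim\mathcal{N}\big(\hat r_{a,n_{a,t}},\frac{m\ln t}{n_{a,t}+1}\big)$ and play the $m$ arms with largest $w_{a,t}$; $n_{a,t}$ is the number of plays of $a$ in rounds $1,\dots,t-1$, $\hat r_{a,n_{a,t}}$ its empirical mean ($0$ if unplayed). $k_s$ is the number of arms of $[N]\setminus G$ played in round $s$, $K_{t-1}:=\sum_{s=1}^{t-1}k_s$, and $H:=\lceil64m\ln T/\Delta^2\rceil$. *)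

theory Defs
  imports Complex_Main
begin

text \<open>A (sample path of) the play sequence is A :: nat => nat set,
  A s = set of arms played in round s (s >= 1). CTS-G plays in round s the m arms with
  the largest samples w s a; since Gaussian samples have full support on the reals,
  a sample path is described by an arbitrary real sample vector w s with A s being
  a top-m set for w s.\<close>

definition ctsg_path :: "nat \<Rightarrow> nat \<Rightarrow> (nat \<Rightarrow> nat \<Rightarrow> real) \<Rightarrow> (nat \<Rightarrow> nat set) \<Rightarrow> bool" where
  "ctsg_path N m w A \<longleftrightarrow>
     (\<forall>s\<ge>1. A s \<subseteq> {1..N} \<and> card (A s) = m \<and>
        (\<forall>a\<in>A s. \<forall>b\<in>{1..N} - A s. w s b \<le> w s a))"

definition plays :: "(nat \<Rightarrow> nat set) \<Rightarrow> nat \<Rightarrow> nat \<Rightarrow> nat" where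
  "plays A a t = card {s \<in> {1..<t}. a \<in> A s}"

text \<open>k_s: number of arms outside G played in round s; K_{t-1} = sum_{s=1}^{t-1} k_s.\<close>
definition Kbad :: "(nat \<Rightarrow> nat set) \<Rightarrow> nat set \<Rightarrow> nat \<Rightarrow> nat" where
  "Kbad A G t = (\<Sum>s\<in>{1..<t}. card (A s - G))"

definition gap :: "nat \<Rightarrow> nat \<Rightarrow> real" where
  "gap N T = 4/5 * sqrt (real N * ln (real T) / real T)"

definition Hth :: "nat \<Rightarrow> nat \<Rightarrow> nat \<Rightarrow> nat" where
  "Hth N m T = nat \<lceil>64 * real m * ln (real T) / (gap N T)^2\<rceil>"

end

theory Submission
  imports Defs
begin

lemma count_sum:
  assumes "ctsg_path N m w A" "G \<subseteq> {1..N}" "card G = m"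
  shows "(\<Sum>a\<in>G. plays A a t) + Kbad A G t = m * (t - 1)"
proof -
  have fG: "finite G" using assms(2) finite_subset by blast
  have "(\<Sum>a\<in>G. plays A a t) = (\<Sum>a\<in>G. \<Sum>s\<in>{1..<t}. (if a \<in> A s then 1 else 0::nat))"
    unfolding plays_def by (simp add: sum.If_cases Int_def)
  also have "\<dots> = (\<Sum>s\<in>{1..<t}. \<Sum>a\<in>G. (if a \<in> A s then 1 else 0::nat))"
    by (rule sum.swap)
  also have "\<dots> = (\<Sum>s\<in>{1..<t}. card (A s \<inter> G))"
    using fG by (intro sum.cong) (auto simp: sum.If_cases Int_def conj_commute)
  finally have e: "(\<Sum>a\<in>G. plays A a t) = (\<Sum>s\<in>{1..<t}. card (A s \<inter> G))" .
  have "\<And>s. s \<in> {1..<t} \<Longrightarrow> card (A s \<inter> G) + card (A s - G) = m"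
  proof -
    fix s assume "s \<in> {1..<t}"
    then have "A s \<subseteq> {1..N}" "card (A s) = m" using assms(1) unfolding ctsg_path_def by auto
    then have "finite (A s)" using finite_subset by blast
    then show "card (A s \<inter> G) + card (A s - G) = m"
      using \<open>card (A s) = m\<close> card_Int_Diff by metis
  qed
  then have "(\<Sum>s\<in>{1..<t}. card (A s \<inter> G) + card (A s - G)) = (\<Sum>s\<in>{1..<t}. m)"
    by (intro sum.cong) auto
  then show ?thesis unfolding e Kbad_def sum.distrib[symmetric] by simp
qed

theorem lemma7:
  fixes N m T t :: nat and G :: "nat set"
    and w :: "nat \<Rightarrow> nat \<Rightarrow> real" and A :: "nat \<Rightarrow> nat set"
  assumes "m \<ge> 1" and "N \<ge> 400 * m"
    and "real T > 16/25 * real N * ln (real T)"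
    and "G \<subseteq> {1..N}" and "card G = m"
    and "ctsg_path N m w A"
    and "real t > real T / 2" and "t \<le> T"
    and "real (Kbad A G t) \<le> 0.5 * real m * (real t - real (Hth N m T))"
  shows "real (card {a \<in> G. plays A a t \<ge> Hth N m T}) \<ge> real m / 2"
proof -
  define H where "H = Hth N m T"
  have fG: "finite G" using assms(4) finite_subset by blast
  show ?thesis
  proof (cases "H = 0")
    case True
    then have "{a \<in> G. plays A a t \<ge> Hth N m T} = G" using H_def by auto
    then show ?thesis using assms(5) by simp
  next
    case False
    have T1: "T \<ge> 1" using assms(7,8) by linarith
    have T2: "T \<ge> 2"
    proof (rule ccontr)
      assume "\<not> T \<ge> 2"
      then have "T = 1" using T1 by auto
      then have "H = 0" unfolding H_def Hth_def gap_def by simp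
      then show False using False by simp
    qed
    have lnT: "ln (real T) \<ge> 1/2"
    proof -
      have "ln (1 / real T) \<le> 1 / real T - 1" using T2 by (intro ln_le_minus_one) auto
      moreover have "ln (1 / real T) = - ln (real T)" using T2 by (simp add: ln_div)
      moreover have "1 / real T \<le> 1/2" using T2 by simp
      ultimately show ?thesis by linarith
    qed
    have Npos: "real N > 0" using assms(1,2) by simp
    have T4: "real T \<ge> 4"
    proof -
      have "16/25 * real N * ln (real T) \<ge> 16/25 * 400 * (1/2)"
        using assms(1,2) lnT by (intro mult_mono) auto
      then show ?thesis using assms(3) by linarith
    qed
    have g2: "(gap N T)^2 = 16/25 * (real N * ln (real T) / real T)"
      unfolding gap_def power_mult_distrib using lnT Npos T2
      by (simp add: power2_eq_square)
    have x: "64 * real m * ln (real T) / (gap N T)^2 = 100 * real m * real T / real N"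
      unfolding g2 using lnT Npos T2 by (simp add: field_simps)
    have "100 * real m * real T / real N \<le> real T / 4"
    proof -
      have mN: "real m * 400 \<le> real N" using assms(2) by linarith
      have "real T * (real m * 400) \<le> real T * real N" by (rule mult_left_mono[OF mN]) simp
      then show ?thesis using Npos by (simp add: field_simps mult.commute)
    qed
    then have "real H < real T / 4 + 1"
      unfolding H_def Hth_def x by linarith
    then have Ht: "real H < real t" using T4 assms(7) by linarith
    define Gb where "Gb = {a \<in> G. plays A a t \<ge> H}"
    have fGb: "finite Gb" "Gb \<subseteq> G" using fG Gb_def by auto
    have pl: "plays A a t \<le> t - 1" for a
    proof -
      have "plays A a t \<le> card {1..<t}" unfolding plays_def by (rule card_mono) auto
      then show ?thesis by simp
    qed
    have t1: "t \<ge> 1" using Ht by linarith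
    have plr: "real (plays A a t) \<le> real t - 1" for a
    proof -
      have "real (plays A a t) \<le> real (t - 1)" using pl[of a] by (simp only: of_nat_le_iff)
      then show ?thesis using t1 by (simp add: of_nat_diff)
    qed
    have s1: "(\<Sum>a\<in>Gb. real (plays A a t)) \<le> real (card Gb) * (real t - 1)"
    proof -
      have "(\<Sum>a\<in>Gb. real (plays A a t)) \<le> (\<Sum>a\<in>Gb. real t - 1)"
        using plr by (intro sum_mono) auto
      then show ?thesis by simp
    qed
    have s2: "(\<Sum>a\<in>G - Gb. real (plays A a t)) \<le> real (card (G - Gb)) * (real H - 1)"
    proof -
      have "(\<Sum>a\<in>G - Gb. real (plays A a t)) \<le> (\<Sum>a\<in>G - Gb. real H - 1)"
        using Gb_def by (intro sum_mono) auto
      then show ?thesis by simp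
    qed
    have cG: "card (G - Gb) = m - card Gb" "card Gb \<le> m"
      using fGb assms(5) card_Diff_subset card_mono fG by auto
    have split: "(\<Sum>a\<in>G. real (plays A a t)) = (\<Sum>a\<in>Gb. real (plays A a t)) + (\<Sum>a\<in>G - Gb. real (plays A a t))"
      using sum.subset_diff[OF fGb(2) fG, of "\<lambda>a. real (plays A a t)"] by linarith
    have cs: "(\<Sum>a\<in>G. real (plays A a t)) + real (Kbad A G t) = real m * (real t - 1)"
    proof -
      have "real ((\<Sum>a\<in>G. plays A a t) + Kbad A G t) = real (m * (t - 1))"
        using count_sum[OF assms(6,4,5)] by simp
      moreover have "t \<ge> 1" using Ht by linarith
      ultimately show ?thesis by (simp add: of_nat_diff)
    qed
    define g where "g = real (card Gb)"
    have cg: "real (card (G - Gb)) = real m - g" using cG g_def by (simp add: of_nat_diff)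
    have "real m * (real t - 1) - 0.5 * real m * (real t - real H) \<le> g * (real t - 1) + (real m - g) * (real H - 1)"
    proof -
      have s1': "(\<Sum>a\<in>Gb. real (plays A a t)) \<le> g * (real t - 1)" using s1 g_def by simp
      have s2': "(\<Sum>a\<in>G - Gb. real (plays A a t)) \<le> (real m - g) * (real H - 1)" using s2 cg by simp
      have k: "real (Kbad A G t) \<le> 0.5 * real m * (real t - real H)" using assms(9) H_def by simp
      show ?thesis using cs split s1' s2' k by linarith
    qed
    moreover have "(real m - g) * (real t - real H) - (real m / 2) * (real t - real H) =
       (real m * (real t - 1) - 0.5 * real m * (real t - real H)) - (g * (real t - 1) + (real m - g) * (real H - 1))"
      by (simp add: field_simps)
    ultimately have "(real m - g) * (real t - real H) \<le> (real m / 2) * (real t - real H)"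
      by linarith
    then have "real m - g \<le> real m / 2" using Ht by (simp add: mult_le_cancel_right)
    then show ?thesis unfolding g_def Gb_def H_def by linarith
  qed
qed

end
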